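(* For every integer $k\ge 2$, the renormalization constant $r_k$ of $SG_k$ satisfies $r_k>\dfrac{2}{3k}$.
   Context: Let $q_0,q_1,q_2$ be the vertices of an equilateral triangle $T$ in $\mathbb R^2$ with side length $1$. Fix $k\ge2$ and let $d=k(k+1)/2$. $SG_k$ is the self-similar set $K=\bigcup_{i=0}^{d-1}F_i(K)$. Here $F_i(x)=x/k+b_i$ are the similitudes mapping $T$ onto the $d$ triangles of side $1/k$ having the same orientation as $T$ in the subdivision of $T$ into $k^2$ such triangles. Set $V_0=\{q_0,q_1,q_2\}$ and $V_1=\bigcup_i F_i(V_0)$. The graph $\Gamma_1$ has vertex set $V_1$, with $x\sim_1 y$ iff $x\neq y$ and both lie in some $F_i(V_0)$. The complete graph on $V_0$ is $\Gamma_0$. With $\mathcal E_m(u)=r^{-m}\sum_{x\sim_m y}(u(x)-u(y))^2$, the renormalization constant $r_k>0$ is the unique $r$ such that for all $u:V_0\to\mathbb R$, $\min\{\mathcal E_1(\tilde u):\tilde u|_{V_0}=u\}=\mathcal E_0(u)$. *)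

theory Defs
  imports Complex_Main
begin

text \<open>The plane is modelled as the complex numbers. The equilateral triangle T with
side length 1 has vertices q0 = 0, q1 = 1, q2 = e^(i pi/3).\<close>

definition q0 :: complex where "q0 = 0"
definition q1 :: complex where "q1 = 1"
definition q2 :: complex where "q2 = Complex (1/2) (sqrt 3 / 2)"

definition V0 :: "complex set" where "V0 = {q0, q1, q2}"

text \<open>Index set of the d = k(k+1)/2 upward subtriangles of side 1/k:
the subtriangle with index (a,b) has vertices (a + b q2 + {q0,q1,q2})/k, a + b <= k-1.\<close>

definition cells :: "nat \<Rightarrow> (nat \<times> nat) set" where
  "cells k = {(a, b). a + b < k}"

definition Fmap :: "nat \<Rightarrow> nat \<times> nat \<Rightarrow> complex \<Rightarrow> complex" where
  "Fmap k i x = x / of_nat k + (of_nat (fst i) * q1 + of_nat (snd i) * q2) / of_nat k"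

definition V1 :: "nat \<Rightarrow> complex set" where
  "V1 k = (\<Union>i\<in>cells k. Fmap k i ` V0)"

text \<open>Adjacency relations of Gamma_0 (complete graph on V0) and Gamma_1, as sets of ordered pairs.\<close>

definition edges0 :: "(complex \<times> complex) set" where
  "edges0 = {(x, y). x \<in> V0 \<and> y \<in> V0 \<and> x \<noteq> y}"

definition edges1 :: "nat \<Rightarrow> (complex \<times> complex) set" where
  "edges1 k = {(x, y). x \<in> V1 k \<and> y \<in> V1 k \<and> x \<noteq> y \<and>
                 (\<exists>i\<in>cells k. x \<in> Fmap k i ` V0 \<and> y \<in> Fmap k i ` V0)}"

definition energy0 :: "(complex \<Rightarrow> real) \<Rightarrow> real" where
  "energy0 u = (\<Sum>(x, y)\<in>edges0. (u x - u y)^2)"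

definition energy1 :: "nat \<Rightarrow> real \<Rightarrow> (complex \<Rightarrow> real) \<Rightarrow> real" where
  "energy1 k r u = (1 / r) * (\<Sum>(x, y)\<in>edges1 k. (u x - u y)^2)"

definition min_ext_energy :: "nat \<Rightarrow> real \<Rightarrow> (complex \<Rightarrow> real) \<Rightarrow> real" where
  "min_ext_energy k r u = Inf {energy1 k r v | v. \<forall>x\<in>V0. v x = u x}"

definition renorm_const :: "nat \<Rightarrow> real" where
  "renorm_const k = (THE r. r > 0 \<and> (\<forall>u. min_ext_energy k r u = energy0 u))"

end

theory Submission
  imports Defs
begin



lemma additive_bounded_linear:
  fixes h :: "real \<Rightarrow> real"
  assumes add: "\<And>s t. h (s + t) = h s + h t"
    and bnd: "\<And>t. \<bar>t\<bar> \<le> 1 \<Longrightarrow> \<bar>h t\<bar> \<le> K"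
  shows "h t = t * h 1"
proof -
  define d where "d x = h x - x * h 1" for x
  have dadd: "d (s + t) = d s + d t" for s t by (simp add: d_def add algebra_simps)
  have d0: "d 0 = 0" using dadd[of 0 0] by simp
  have dneg: "d (- s) = - d s" for s using dadd[of s "-s"] d0 by simp
  have dnat: "d (of_nat n * s) = of_nat n * d s" for n s
    by (induction n) (simp_all add: d0 dadd distrib_right)
  have d1: "d 1 = 0" by (simp add: d_def)
  have dint: "d (of_int m) = 0" for m
  proof (cases "m \<ge> 0")
    case True
    then obtain n where "m = int n" by (metis nonneg_eq_int)
    then show ?thesis using dnat[of n 1] d1 by simp
  next
    case False
    then obtain n where "m = - int n" by (metis nonneg_eq_int neg_0_le_iff_le linorder_linear minus_minus)
    then show ?thesis using dnat[of n 1] d1 dneg[of "of_nat n"] by simp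
  qed
  have dbnd: "\<bar>d s\<bar> \<le> K + \<bar>h 1\<bar>" if "\<bar>s\<bar> \<le> 1" for s
  proof -
    have "\<bar>s * h 1\<bar> \<le> \<bar>h 1\<bar>" using that by (simp add: abs_mult mult_left_le_one_le)
    then show ?thesis using bnd[OF that] abs_triangle_ineq4[of "h s" "s * h 1"] unfolding d_def by linarith
  qed
  have nb: "of_nat n * \<bar>d t\<bar> \<le> K + \<bar>h 1\<bar>" for n
  proof -
    define m where "m = \<lfloor>of_nat n * t\<rfloor>"
    define s where "s = of_nat n * t - of_int m"
    have "0 \<le> s" "s < 1" unfolding s_def m_def by linarith+
    then have "\<bar>d s\<bar> \<le> K + \<bar>h 1\<bar>" by (intro dbnd) simp
    moreover have "d s = of_nat n * d t"
      unfolding s_def using dadd[of "of_nat n * t" "- of_int m"] dneg[of "of_int m"] dint[of m] dnat[of n t]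
      by simp
    ultimately show ?thesis by (simp add: abs_mult)
  qed
  have "d t = 0"
  proof (rule ccontr)
    assume "d t \<noteq> 0"
    then have pos: "\<bar>d t\<bar> > 0" by simp
    obtain n :: nat where "of_nat n > (K + \<bar>h 1\<bar>) / \<bar>d t\<bar>" using reals_Archimedean2 by blast
    then have "of_nat n * \<bar>d t\<bar> > K + \<bar>h 1\<bar>" using pos by (simp add: field_simps)
    with nb[of n] show False by simp
  qed
  then show ?thesis by (simp add: d_def)
qed

lemma absdiff4: "0 \<le> (a::real) \<Longrightarrow> 0 \<le> b \<Longrightarrow> a + b \<le> c \<Longrightarrow> \<bar>(a - b)/4\<bar> \<le> c/4"
  by (simp add: abs_le_iff)

locale quadN =
  fixes N :: "('a \<Rightarrow> real) \<Rightarrow> real"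
  assumes par: "\<And>u w. N (\<lambda>x. u x + w x) + N (\<lambda>x. u x - w x) = 2 * N u + 2 * N w"
    and hom: "\<And>t u. N (\<lambda>x. t * u x) = t^2 * N u"
    and pos: "\<And>u. N u \<ge> 0"
begin

definition B where "B u w = (N (\<lambda>x. u x + w x) - N (\<lambda>x. u x - w x)) / 4"

lemma Nneg: "N (\<lambda>x. - u x) = N u"
  using hom[of "-1" u] by simp

lemma Bsym: "B u w = B w u"
proof -
  have "N (\<lambda>x. u x - w x) = N (\<lambda>x. w x - u x)"
    using Nneg[of "\<lambda>x. w x - u x"] by simp
  then show ?thesis unfolding B_def by (simp add: add.commute)
qed

lemma L1: "B (\<lambda>z. x z + x' z) y + B (\<lambda>z. x z - x' z) y = 2 * B x y"
proof -
  have e1: "(\<lambda>z. (x z + y z) + x' z) = (\<lambda>z. x z + x' z + y z)" by (rule ext) (simp add: algebra_simps)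
  have e2: "(\<lambda>z. (x z + y z) - x' z) = (\<lambda>z. x z - x' z + y z)" by (rule ext) (simp add: algebra_simps)
  have e3: "(\<lambda>z. (x z - y z) + x' z) = (\<lambda>z. x z + x' z - y z)" by (rule ext) (simp add: algebra_simps)
  have e4: "(\<lambda>z. (x z - y z) - x' z) = (\<lambda>z. x z - x' z - y z)" by (rule ext) (simp add: algebra_simps)
  have 1: "N (\<lambda>z. x z + x' z + y z) + N (\<lambda>z. x z - x' z + y z) = 2 * N (\<lambda>z. x z + y z) + 2 * N x'"
    using par[of "\<lambda>z. x z + y z" x'] unfolding e1 e2 .
  have 2: "N (\<lambda>z. x z + x' z - y z) + N (\<lambda>z. x z - x' z - y z) = 2 * N (\<lambda>z. x z - y z) + 2 * N x'"
    using par[of "\<lambda>z. x z - y z" x'] unfolding e3 e4 .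
  show ?thesis unfolding B_def using 1 2 by argo
qed

lemma B0: "B (\<lambda>z. 0) y = 0"
  unfolding B_def using Nneg[of y] by simp

lemma B2: "B (\<lambda>z. 2 * x z) y = 2 * B x y"
proof -
  have e1: "(\<lambda>z. x z + x z) = (\<lambda>z. 2 * x z)" by (rule ext) simp
  have e2: "(\<lambda>z. x z - x z) = (\<lambda>z. 0)" by (rule ext) simp
  show ?thesis using L1[of x x y] B0[of y] unfolding e1 e2 by argo
qed

lemma Badd: "B (\<lambda>z. a z + b z) y = B a y + B b y"
proof -
  have "B a y + B b y = B (\<lambda>z. (a z + b z)/2 + (a z - b z)/2) y + B (\<lambda>z. (a z + b z)/2 - (a z - b z)/2) y"
    by (simp add: field_simps)
  also have "\<dots> = 2 * B (\<lambda>z. (a z + b z)/2) y" by (rule L1)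
  also have "\<dots> = B (\<lambda>z. 2 * ((a z + b z)/2)) y" by (rule B2[symmetric])
  also have "(\<lambda>z. 2 * ((a z + b z)/2)) = (\<lambda>z. a z + b z)" by (rule ext) (simp add: field_simps)
  finally show ?thesis by simp
qed

lemma Bscal: "B (\<lambda>z. t * p z) q = t * B p q"
proof -
  define h where "h s = B (\<lambda>z. s * p z) q" for s
  have "h (s1 + s2) = h s1 + h s2" for s1 s2
    unfolding h_def using Badd[of "\<lambda>z. s1 * p z" "\<lambda>z. s2 * p z" q] by (simp add: distrib_right)
  moreover have "\<bar>h s\<bar> \<le> (N p + N q) / 2" if "\<bar>s\<bar> \<le> 1" for s
  proof -
    have e: "N (\<lambda>z. s * p z + q z) + N (\<lambda>z. s * p z - q z) = 2 * s^2 * N p + 2 * N q"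
      using par[of "\<lambda>z. s * p z" q] hom[of s p] by simp
    have "s^2 \<le> 1" using that by (simp add: abs_square_le_1)
    then have "s^2 * N p \<le> N p" using pos[of p] by (simp add: mult_left_le_one_le)
    then have "N (\<lambda>z. s * p z + q z) + N (\<lambda>z. s * p z - q z) \<le> 2 * N p + 2 * N q"
      using e by argo
    then have "\<bar>(N (\<lambda>z. s * p z + q z) - N (\<lambda>z. s * p z - q z)) / 4\<bar> \<le> (2 * N p + 2 * N q) / 4"
      by (intro absdiff4 pos)
    then show ?thesis unfolding h_def B_def by simp
  qed
  ultimately have "h t = t * h 1" by (rule additive_bounded_linear)
  then show ?thesis unfolding h_def by simp
qed

lemma Bscal2: "B (\<lambda>z. s * p z) (\<lambda>z. t * q z) = s * t * B p q"
proof -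
  have "B (\<lambda>z. s * p z) (\<lambda>z. t * q z) = s * B p (\<lambda>z. t * q z)" by (rule Bscal)
  also have "B p (\<lambda>z. t * q z) = B (\<lambda>z. t * q z) p" by (rule Bsym)
  also have "\<dots> = t * B q p" by (rule Bscal)
  also have "B q p = B p q" by (rule Bsym)
  finally show ?thesis by simp
qed

lemma Nsum: "N (\<lambda>z. p z + q z) = N p + N q + 2 * B p q"
  using par[of p q] unfolding B_def by argo

lemma Nlin2: "N (\<lambda>z. s * p z + t * q z) = s^2 * N p + t^2 * N q + s * t * (N (\<lambda>z. p z + q z) - N p - N q)"
proof -
  have "N (\<lambda>z. s * p z + t * q z) = s^2 * N p + t^2 * N q + 2 * (s * t * B p q)"
    using Nsum[of "\<lambda>z. s * p z" "\<lambda>z. t * q z"] hom[of s p] hom[of t q] Bscal2[of s p t q] by argo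
  moreover have "2 * B p q = N (\<lambda>z. p z + q z) - N p - N q" using Nsum[of p q] by simp
  ultimately show ?thesis by (simp add: algebra_simps)
qed

end



definition S :: "nat \<Rightarrow> (complex \<Rightarrow> real) \<Rightarrow> real" where
  "S k v = (\<Sum>(x, y)\<in>edges1 k. (v x - v y)^2)"
definition Ext :: "(complex \<Rightarrow> real) \<Rightarrow> (complex \<Rightarrow> real) set" where
  "Ext u = {v. \<forall>x\<in>V0. v x = u x}"
definition M :: "nat \<Rightarrow> (complex \<Rightarrow> real) \<Rightarrow> real" where
  "M k u = Inf (S k ` Ext u)"

lemma S_nonneg: "S k v \<ge> 0"
  unfolding S_def by (intro sum_nonneg) auto

lemma Ext_self: "u \<in> Ext u" by (simp add: Ext_def)

lemma M_le: "v \<in> Ext u \<Longrightarrow> M k u \<le> S k v"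
  unfolding M_def by (rule cInf_lower) (auto intro: bdd_belowI[of _ 0] simp: S_nonneg)

lemma M_ge: "(\<And>v. v \<in> Ext u \<Longrightarrow> c \<le> S k v) \<Longrightarrow> c \<le> M k u"
  unfolding M_def by (rule cInf_greatest) (auto simp: Ext_def)

lemma M_mono: "(\<And>v. v \<in> Ext u \<Longrightarrow> \<exists>v'\<in>Ext u'. S k v' \<le> S k v) \<Longrightarrow> M k u' \<le> M k u"
  by (rule M_ge) (meson M_le order_trans)

lemma M_nonneg: "M k u \<ge> 0"
  by (rule M_ge) (simp add: S_nonneg)

lemma S_par: "S k (\<lambda>x. v x + w x) + S k (\<lambda>x. v x - w x) = 2 * S k v + 2 * S k w"
  unfolding S_def sum.distrib[symmetric] sum_distrib_left
  by (intro sum.cong refl) (auto simp: power2_eq_square algebra_simps)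

lemma S_hom: "S k (\<lambda>x. t * v x) = t^2 * S k v"
  unfolding S_def sum_distrib_left
  by (intro sum.cong refl) (auto simp: power2_eq_square algebra_simps)

lemma M_par_le: "M k (\<lambda>x. u x + w x) + M k (\<lambda>x. u x - w x) \<le> 2 * M k u + 2 * M k w"
proof -
  have "(M k (\<lambda>x. u x + w x) + M k (\<lambda>x. u x - w x) - 2 * M k u) / 2 \<le> S k w'" if w': "w' \<in> Ext w" for w'
  proof -
    have "(M k (\<lambda>x. u x + w x) + M k (\<lambda>x. u x - w x) - 2 * S k w') / 2 \<le> S k v" if v: "v \<in> Ext u" for v
    proof -
      have "M k (\<lambda>x. u x + w x) \<le> S k (\<lambda>x. v x + w' x)"
        by (rule M_le) (use v w' in \<open>auto simp: Ext_def\<close>)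
      moreover have "M k (\<lambda>x. u x - w x) \<le> S k (\<lambda>x. v x - w' x)"
        by (rule M_le) (use v w' in \<open>auto simp: Ext_def\<close>)
      ultimately show ?thesis using S_par[of k v w'] by argo
    qed
    then have "(M k (\<lambda>x. u x + w x) + M k (\<lambda>x. u x - w x) - 2 * S k w') / 2 \<le> M k u"
      by (rule M_ge)
    then show ?thesis by argo
  qed
  then have "(M k (\<lambda>x. u x + w x) + M k (\<lambda>x. u x - w x) - 2 * M k u) / 2 \<le> M k w"
    by (rule M_ge)
  then show ?thesis by argo
qed

lemma M_hom_le: "M k (\<lambda>x. t * u x) \<le> t^2 * M k u"
proof (cases "t = 0")
  case True
  have "M k (\<lambda>x. t * u x) \<le> S k (\<lambda>x. 0)" by (rule M_le) (simp add: Ext_def True)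
  then show ?thesis by (simp add: S_def True)
next
  case False
  have "M k (\<lambda>x. t * u x) / t^2 \<le> S k v" if "v \<in> Ext u" for v
  proof -
    have "M k (\<lambda>x. t * u x) \<le> S k (\<lambda>x. t * v x)"
      by (rule M_le) (use that in \<open>auto simp: Ext_def\<close>)
    then show ?thesis using False by (simp add: S_hom field_simps)
  qed
  then have "M k (\<lambda>x. t * u x) / t^2 \<le> M k u" by (rule M_ge)
  then show ?thesis using False by (simp add: field_simps)
qed

lemma M_hom: "M k (\<lambda>x. t * u x) = t^2 * M k u"
proof (cases "t = 0")
  case True
  then show ?thesis using M_hom_le[of k t u] M_nonneg[of k "\<lambda>x. t * u x"] by simp
next
  case False
  have "M k (\<lambda>x. (1/t) * (t * u x)) \<le> (1/t)^2 * M k (\<lambda>x. t * u x)" by (rule M_hom_le)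
  then have "M k u \<le> (1/t)^2 * M k (\<lambda>x. t * u x)" using False by simp
  then have "t^2 * M k u \<le> M k (\<lambda>x. t * u x)" using False by (simp add: field_simps)
  then show ?thesis using M_hom_le[of k t u] by simp
qed

lemma M_par: "M k (\<lambda>x. u x + w x) + M k (\<lambda>x. u x - w x) = 2 * M k u + 2 * M k w"
proof -
  have "M k (\<lambda>x. (u x + w x) + (u x - w x)) + M k (\<lambda>x. (u x + w x) - (u x - w x))
        \<le> 2 * M k (\<lambda>x. u x + w x) + 2 * M k (\<lambda>x. u x - w x)" by (rule M_par_le)
  moreover have "(\<lambda>x. (u x + w x) + (u x - w x)) = (\<lambda>x. 2 * u x)" by auto
  moreover have "(\<lambda>x. (u x + w x) - (u x - w x)) = (\<lambda>x. 2 * w x)" by auto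
  ultimately have "4 * M k u + 4 * M k w \<le> 2 * M k (\<lambda>x. u x + w x) + 2 * M k (\<lambda>x. u x - w x)"
    by (simp add: M_hom)
  then show ?thesis using M_par_le[of k u w] by argo
qed

interpretation Mq: quadN "M k"
  by unfold_locales (auto simp: M_par M_hom M_nonneg)

lemma M_cong: "(\<And>x. x \<in> V0 \<Longrightarrow> u x = u' x) \<Longrightarrow> M k u = M k u'"
  unfolding M_def Ext_def by (rule arg_cong[where f=Inf]) auto

lemma M_const: "M k (\<lambda>x. u x + c) = M k u"
proof (rule antisym)
  show "M k (\<lambda>x. u x + c) \<le> M k u"
    by (rule M_mono) (rule bexI[of _ "\<lambda>x. _ x + c"], auto simp: S_def Ext_def)
  show "M k u \<le> M k (\<lambda>x. u x + c)"
    by (rule M_mono) (rule bexI[of _ "\<lambda>x. _ x - c"], auto simp: S_def Ext_def)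
qed




lemma s3: "sqrt 3 * sqrt 3 = (3::real)" by simp

lemma q_distinct: "q0 \<noteq> q1" "q0 \<noteq> q2" "q1 \<noteq> q2" "q1 \<noteq> q0" "q2 \<noteq> q0" "q2 \<noteq> q1"
  by (auto simp: q0_def q1_def q2_def complex_eq_iff)

definition rho :: "complex \<Rightarrow> complex" where "rho z = (q2 - 1) * z + 1"

lemma rho_q: "rho q0 = q1" "rho q1 = q2" "rho q2 = q0"
  by (auto simp: rho_def q0_def q1_def q2_def complex_eq_iff algebra_simps s3)

lemma rho3: "rho (rho (rho z)) = z"
  by (auto simp: rho_def q2_def complex_eq_iff algebra_simps s3 power2_eq_square)

lemma rho_V0: "x \<in> V0 \<Longrightarrow> rho x \<in> V0"
  by (auto simp: V0_def rho_q)

lemma q2m1: "q2 - 1 \<noteq> 0"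
  by (auto simp: q2_def complex_eq_iff)

lemma rho_inj: "rho x = rho y \<Longrightarrow> x = y"
  using q2m1 by (auto simp: rho_def)

lemma rho_F:
  assumes "a + b < k"
  shows "rho (Fmap k (a, b) x) = Fmap k (k - 1 - a - b, a) (rho x)"
proof -
  have k: "k > 0" using assms by simp
  have e: "real (k - Suc (a + b)) = real k - 1 - real a - real b" using assms by (simp add: of_nat_diff)
  show ?thesis using k
    by (simp add: rho_def Fmap_def q1_def q2_def complex_eq_iff e field_simps s3)
qed

definition rc :: "nat \<Rightarrow> nat \<times> nat \<Rightarrow> nat \<times> nat" where
  "rc k i = (k - 1 - fst i - snd i, fst i)"

lemma rho_cell:
  assumes "i \<in> cells k" "x \<in> Fmap k i ` V0"
  shows "rc k i \<in> cells k" "rho x \<in> Fmap k (rc k i) ` V0"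
proof -
  obtain a b where i: "i = (a, b)" by (cases i)
  with assms have ab: "a + b < k" by (simp add: cells_def)
  then show "rc k i \<in> cells k" by (simp add: rc_def cells_def i)
  from assms obtain x0 where x0: "x0 \<in> V0" "x = Fmap k i x0" by auto
  show "rho x \<in> Fmap k (rc k i) ` V0"
    using rho_F[OF ab, of x0] x0 rho_V0[of x0] by (auto simp: i rc_def)
qed

lemma rho_edge: "(x, y) \<in> edges1 k \<Longrightarrow> (rho x, rho y) \<in> edges1 k"
proof -
  assume "(x, y) \<in> edges1 k"
  then obtain i where i: "i \<in> cells k" "x \<in> Fmap k i ` V0" "y \<in> Fmap k i ` V0" and ne: "x \<noteq> y"
    by (auto simp: edges1_def)
  have "rho x \<in> V1 k" "rho y \<in> V1 k"
    using rho_cell[OF i(1,2)] rho_cell[OF i(1,3)] by (auto simp: V1_def)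
  moreover have "rho x \<noteq> rho y" using ne rho_inj by blast
  ultimately show ?thesis using rho_cell[OF i(1,2)] rho_cell[OF i(1,3)] by (auto simp: edges1_def)
qed

lemma S_rho: "S k (\<lambda>z. v (rho z)) = S k v"
  unfolding S_def
proof (rule sum.reindex_bij_witness[where i="\<lambda>(x,y). (rho (rho x), rho (rho y))" and j="\<lambda>(x,y). (rho x, rho y)"])
qed (auto simp: rho3 rho_edge)

lemma M_rho_le: "M k (\<lambda>z. u (rho z)) \<le> M k u"
proof (rule M_mono)
  fix v assume "v \<in> Ext u"
  then have h: "(\<lambda>z. v (rho z)) \<in> Ext (\<lambda>z. u (rho z))" by (auto simp: Ext_def rho_V0)
  then show "\<exists>v'\<in>Ext (\<lambda>z. u (rho z)). S k v' \<le> S k v" by (intro bexI[OF _ h]) (simp add: S_rho)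
qed

lemma M_rho: "M k (\<lambda>z. u (rho z)) = M k u"
proof -
  have "M k u = M k (\<lambda>z. u (rho (rho (rho z))))" by (simp add: rho3)
  also have "\<dots> \<le> M k (\<lambda>z. u (rho (rho z)))" by (rule M_rho_le)
  also have "\<dots> \<le> M k (\<lambda>z. u (rho z))" by (rule M_rho_le)
  finally show ?thesis using M_rho_le[of k u] by simp
qed

definition dl :: "complex \<Rightarrow> complex \<Rightarrow> real" where "dl q z = (if z = q then 1 else 0)"

lemma M_d: "M k (dl q1) = M k (dl q0)" "M k (dl q2) = M k (dl q0)"
proof -
  have "M k (dl q1) = M k (\<lambda>z. dl q1 (rho z))" by (simp add: M_rho)
  also have "\<dots> = M k (dl q0)"
    by (rule M_cong) (auto simp: V0_def dl_def rho_q q_distinct)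
  finally show "M k (dl q1) = M k (dl q0)" .
  have "M k (dl q0) = M k (\<lambda>z. dl q0 (rho z))" by (simp add: M_rho)
  also have "\<dots> = M k (dl q2)"
    by (rule M_cong) (auto simp: V0_def dl_def rho_q q_distinct)
  finally show "M k (dl q2) = M k (dl q0)" ..
qed

lemma energy0_formula: "energy0 u = 2 * ((u q0 - u q1)^2 + (u q0 - u q2)^2 + (u q1 - u q2)^2)"
proof -
  have E: "edges0 = {(q0,q1),(q0,q2),(q1,q0),(q1,q2),(q2,q0),(q2,q1)}"
    using q_distinct by (auto simp: edges0_def V0_def)
  show ?thesis unfolding energy0_def E using q_distinct by (simp add: power2_commute algebra_simps)
qed

lemma M_formula: "M k u = M k (dl q0) / 4 * energy0 u"
proof -
  define x where "x = u q0 - u q2"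
  define y where "y = u q1 - u q2"
  have "M k u = M k (\<lambda>z. (x * dl q0 z + y * dl q1 z) + u q2)"
    by (rule M_cong) (auto simp: V0_def dl_def q_distinct x_def y_def)
  also have "\<dots> = M k (\<lambda>z. x * dl q0 z + y * dl q1 z)" by (rule M_const)
  also have "\<dots> = x^2 * M k (dl q0) + y^2 * M k (dl q1) + x * y * (M k (\<lambda>z. dl q0 z + dl q1 z) - M k (dl q0) - M k (dl q1))"
    by (rule Mq.Nlin2)
  also have "M k (\<lambda>z. dl q0 z + dl q1 z) = M k (\<lambda>z. (-1) * dl q2 z + 1)"
    by (rule M_cong) (auto simp: V0_def dl_def q_distinct)
  also have "\<dots> = M k (dl q0)" by (simp only: M_const M_hom M_d) simp
  finally have "M k u = M k (dl q0) * (x^2 + y^2 - x * y)" by (simp add: M_d algebra_simps)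
  moreover have "energy0 u = 4 * (x^2 + y^2 - x * y)"
    by (simp add: energy0_formula x_def y_def power2_eq_square algebra_simps)
  ultimately show ?thesis by simp
qed




lemma cs_sum: "(\<Sum>j<n. d j)^2 \<le> real n * (\<Sum>j<n. (d j)^2)"
proof -
  define s where "s = (\<Sum>j<n. d j)"
  define t where "t = (\<Sum>j<n. (d j)^2)"
  have "0 \<le> (\<Sum>j<n. (real n * d j - s)^2)" by (intro sum_nonneg) simp
  also have "\<dots> = (\<Sum>j<n. (real n)^2 * (d j)^2 - 2 * real n * s * d j + s^2)"
    by (intro sum.cong refl) (simp add: power2_eq_square algebra_simps)
  also have "\<dots> = (real n)^2 * t - 2 * real n * s * s + real n * s^2"
    by (simp add: sum.distrib sum_subtractf sum_distrib_left[symmetric] s_def t_def)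
  finally have "0 \<le> real n * (real n * t - s^2)" by (simp add: power2_eq_square algebra_simps)
  then have "n > 0 \<Longrightarrow> s^2 \<le> real n * t" by (simp add: zero_le_mult_iff)
  moreover have "n = 0 \<Longrightarrow> s^2 \<le> real n * t" by (simp add: s_def)
  ultimately show ?thesis unfolding s_def t_def by blast
qed

lemma path_bound:
  fixes f :: "nat \<Rightarrow> real"
  assumes "k > 0" "f 0 = 1" "f k = 0"
  shows "(\<Sum>j<k. (f j - f (Suc j))^2) \<ge> 1 / real k"
proof -
  have "(\<Sum>j<k. f j - f (Suc j)) = 1" using assms by (simp add: sum_lessThan_telescope')
  then have "1 \<le> real k * (\<Sum>j<k. (f j - f (Suc j))^2)" using cs_sum[of "\<lambda>j. f j - f (Suc j)" k] by simp
  then show ?thesis using assms(1) by (simp add: field_simps)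
qed

definition p1 :: "nat \<Rightarrow> nat \<Rightarrow> complex" where "p1 k j = of_nat j / of_nat k"
definition p2 :: "nat \<Rightarrow> nat \<Rightarrow> complex" where "p2 k j = of_nat j * q2 / of_nat k"

lemma q2nz: "q2 \<noteq> 0" by (simp add: q2_def complex_eq_iff)

lemma p1_F: "k > 0 \<Longrightarrow> p1 k j = Fmap k (j, 0) q0" "k > 0 \<Longrightarrow> p1 k (Suc j) = Fmap k (j, 0) q1"
  by (simp_all add: p1_def Fmap_def q0_def q1_def add_divide_distrib)

lemma p2_F: "k > 0 \<Longrightarrow> p2 k j = Fmap k (0, j) q0" "k > 0 \<Longrightarrow> p2 k (Suc j) = Fmap k (0, j) q2"
  by (simp_all add: p2_def Fmap_def q0_def q1_def add_divide_distrib distrib_right)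

lemma p_Re_Im: "Re (p1 k j) = real j / real k" "Im (p1 k j) = 0"
  "Re (p2 k j) = real j / (2 * real k)" "Im (p2 k j) = real j * sqrt 3 / (2 * real k)"
  by (simp_all add: p1_def p2_def q2_def)

lemma p1_inj: "k > 0 \<Longrightarrow> p1 k a = p1 k b \<longleftrightarrow> a = b"
  by (simp add: p1_def)

lemma p2_inj: "k > 0 \<Longrightarrow> p2 k a = p2 k b \<longleftrightarrow> a = b"
  using q2nz by (simp add: p2_def)

lemma p12: "k > 0 \<Longrightarrow> p1 k a \<noteq> p2 k (Suc b)"
proof
  assume "k > 0" "p1 k a = p2 k (Suc b)"
  then have "Im (p1 k a) = Im (p2 k (Suc b))" by simp
  with \<open>k > 0\<close> show False by (simp add: p_Re_Im)
qed

lemma cell_edge: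
  assumes "i \<in> cells k" "x0 \<in> V0" "y0 \<in> V0" "Fmap k i x0 \<noteq> Fmap k i y0"
  shows "(Fmap k i x0, Fmap k i y0) \<in> edges1 k"
  using assms by (auto simp: edges1_def V1_def)

lemma finite_edges1: "finite (edges1 k)"
proof -
  have "finite (cells k)" by (rule finite_subset[of _ "{..<k} \<times> {..<k}"]) (auto simp: cells_def)
  then have "finite (V1 k)" by (simp add: V1_def V0_def)
  moreover have "edges1 k \<subseteq> V1 k \<times> V1 k" by (auto simp: edges1_def)
  ultimately show ?thesis by (meson finite_SigmaI finite_subset)
qed

lemma S_bound:
  assumes k: "k > 0" and v: "v \<in> Ext (dl q0)"
  shows "S k v \<ge> 4 / real k"
proof -
  have v0: "v q0 = 1" "v q1 = 0" "v q2 = 0" using v q_distinct by (auto simp: Ext_def V0_def dl_def)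
  define g where "g = (\<lambda>(x, y). (v x - v y)^2)"
  define A1 where "A1 = (\<lambda>j. (p1 k j, p1 k (Suc j))) ` {..<k}"
  define A1r where "A1r = (\<lambda>j. (p1 k (Suc j), p1 k j)) ` {..<k}"
  define A2 where "A2 = (\<lambda>j. (p2 k j, p2 k (Suc j))) ` {..<k}"
  define A2r where "A2r = (\<lambda>j. (p2 k (Suc j), p2 k j)) ` {..<k}"
  have cl1: "(j, 0) \<in> cells k" "(0, j) \<in> cells k" if "j < k" for j using that by (auto simp: cells_def)
  have V: "q0 \<in> V0" "q1 \<in> V0" "q2 \<in> V0" by (auto simp: V0_def)
  have ne1: "p1 k j \<noteq> p1 k (Suc j)" "p2 k j \<noteq> p2 k (Suc j)" for j using k p1_inj p2_inj by auto
  have ed: "(p1 k j, p1 k (Suc j)) \<in> edges1 k" "(p1 k (Suc j), p1 k j) \<in> edges1 k"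
    "(p2 k j, p2 k (Suc j)) \<in> edges1 k" "(p2 k (Suc j), p2 k j) \<in> edges1 k" if j: "j < k" for j
  proof -
    have a: "p1 k j = Fmap k (j,0) q0" "p1 k (Suc j) = Fmap k (j,0) q1"
      "p2 k j = Fmap k (0,j) q0" "p2 k (Suc j) = Fmap k (0,j) q2" using p1_F p2_F k by auto
    have n: "Fmap k (j,0) q0 \<noteq> Fmap k (j,0) q1" "Fmap k (0,j) q0 \<noteq> Fmap k (0,j) q2"
      using ne1[of j] unfolding a by auto
    show "(p1 k j, p1 k (Suc j)) \<in> edges1 k" "(p1 k (Suc j), p1 k j) \<in> edges1 k"
      "(p2 k j, p2 k (Suc j)) \<in> edges1 k" "(p2 k (Suc j), p2 k j) \<in> edges1 k"
      unfolding a using cell_edge[OF cl1(1)[OF j] V(1) V(2)] cell_edge[OF cl1(1)[OF j] V(2) V(1)]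
        cell_edge[OF cl1(2)[OF j] V(1) V(3)] cell_edge[OF cl1(2)[OF j] V(3) V(1)] n by auto
  qed
  have sub: "A1 \<union> A1r \<union> (A2 \<union> A2r) \<subseteq> edges1 k"
    unfolding A1_def A1r_def A2_def A2r_def using ed by auto
  have fin: "finite A1" "finite A1r" "finite A2" "finite A2r" by (auto simp: A1_def A1r_def A2_def A2r_def)
  have d1: "A1 \<inter> A1r = {}" "A2 \<inter> A2r = {}" "(A1 \<union> A1r) \<inter> (A2 \<union> A2r) = {}"
    unfolding A1_def A1r_def A2_def A2r_def using k p1_inj p2_inj p12 by auto
  have s1: "sum g A1 \<ge> 1 / real k"
  proof -
    have "sum g A1 = (\<Sum>j<k. (v (p1 k j) - v (p1 k (Suc j)))^2)"
      unfolding A1_def using k by (subst sum.reindex) (auto simp: inj_on_def p1_inj g_def)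
    also have "\<dots> \<ge> 1 / real k"
      by (rule path_bound) (use k v0 in \<open>auto simp: p1_def q0_def q1_def\<close>)
    finally show ?thesis .
  qed
  have s1r: "sum g A1r \<ge> 1 / real k"
  proof -
    have "sum g A1r = (\<Sum>j<k. (v (p1 k j) - v (p1 k (Suc j)))^2)"
      unfolding A1r_def using k by (subst sum.reindex) (auto simp: inj_on_def p1_inj g_def power2_commute)
    also have "\<dots> \<ge> 1 / real k"
      by (rule path_bound) (use k v0 in \<open>auto simp: p1_def q0_def q1_def\<close>)
    finally show ?thesis .
  qed
  have s2: "sum g A2 \<ge> 1 / real k"
  proof -
    have "sum g A2 = (\<Sum>j<k. (v (p2 k j) - v (p2 k (Suc j)))^2)"
      unfolding A2_def using k by (subst sum.reindex) (auto simp: inj_on_def p2_inj g_def)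
    also have "\<dots> \<ge> 1 / real k"
      by (rule path_bound) (use k v0 in \<open>auto simp: p2_def q0_def\<close>)
    finally show ?thesis .
  qed
  have s2r: "sum g A2r \<ge> 1 / real k"
  proof -
    have "sum g A2r = (\<Sum>j<k. (v (p2 k j) - v (p2 k (Suc j)))^2)"
      unfolding A2r_def using k by (subst sum.reindex) (auto simp: inj_on_def p2_inj g_def power2_commute)
    also have "\<dots> \<ge> 1 / real k"
      by (rule path_bound) (use k v0 in \<open>auto simp: p2_def q0_def\<close>)
    finally show ?thesis .
  qed
  have U: "sum g (A1 \<union> A1r \<union> (A2 \<union> A2r)) = sum g A1 + sum g A1r + (sum g A2 + sum g A2r)"
    using fin d1 by (simp add: sum.union_disjoint)
  have L: "sum g (A1 \<union> A1r \<union> (A2 \<union> A2r)) \<le> sum g (edges1 k)"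
    by (rule sum_mono2[OF finite_edges1 sub]) (auto simp: g_def)
  have "sum g (edges1 k) \<ge> 4 / real k" using U L s1 s1r s2 s2r by argo
  then show ?thesis by (simp add: S_def g_def)
qed




lemma min_ext:
  assumes r: "r > 0"
  shows "min_ext_energy k r u = M k u / r"
proof -
  have set: "{energy1 k r v | v. \<forall>x\<in>V0. v x = u x} = (\<lambda>v. S k v / r) ` Ext u"
    by (auto simp: energy1_def S_def Ext_def)
  have bdd: "bdd_below ((\<lambda>v. S k v / r) ` Ext u)"
    by (rule bdd_belowI[of _ 0]) (use r in \<open>auto simp: S_nonneg\<close>)
  have ne: "(\<lambda>v. S k v / r) ` Ext u \<noteq> {}" using Ext_self by blast
  have 1: "M k u / r \<le> Inf ((\<lambda>v. S k v / r) ` Ext u)"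
  proof (rule cInf_greatest[OF ne])
    fix z assume "z \<in> (\<lambda>v. S k v / r) ` Ext u"
    then obtain v where v: "v \<in> Ext u" "z = S k v / r" by auto
    then show "M k u / r \<le> z" using M_le[OF v(1), of k] r by (simp add: divide_right_mono)
  qed
  have "r * Inf ((\<lambda>v. S k v / r) ` Ext u) \<le> M k u"
  proof (rule M_ge)
    fix v assume v: "v \<in> Ext u"
    have "Inf ((\<lambda>v. S k v / r) ` Ext u) \<le> S k v / r" by (rule cInf_lower[OF _ bdd]) (use v in auto)
    then show "r * Inf ((\<lambda>v. S k v / r) ` Ext u) \<le> S k v" using r by (simp add: field_simps)
  qed
  then have 2: "Inf ((\<lambda>v. S k v / r) ` Ext u) \<le> M k u / r" using r by (simp add: field_simps)
  show ?thesis unfolding min_ext_energy_def set using 1 2 by linarith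
qed

lemma energy0_dl: "energy0 (dl q0) = 4"
  using q_distinct by (simp add: energy0_formula dl_def)

theorem lemma2p2:
  fixes k :: nat
  assumes "k \<ge> 2"
  shows "renorm_const k > 2 / (3 * real k)"
proof -
  have k: "k > 0" using assms by simp
  define c where "c = M k (dl q0) / 4"
  have "M k (dl q0) \<ge> 4 / real k" by (rule M_ge) (rule S_bound[OF k])
  then have cge: "c \<ge> 1 / real k" unfolding c_def by simp
  have cpos: "c > 0" using cge k by (smt (verit) of_nat_0_less_iff zero_less_divide_1_iff)
  have "renorm_const k = c"
    unfolding renorm_const_def
  proof (rule the_equality)
    have "min_ext_energy k c u = energy0 u" for u
    proof -
      have "min_ext_energy k c u = M k u / c" by (rule min_ext[OF cpos])
      also have "M k u = c * energy0 u" unfolding c_def by (rule M_formula)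
      finally show ?thesis using cpos by simp
    qed
    then show "c > 0 \<and> (\<forall>u. min_ext_energy k c u = energy0 u)" using cpos by blast
  next
    fix r assume h: "r > 0 \<and> (\<forall>u. min_ext_energy k r u = energy0 u)"
    then have "M k (dl q0) / r = 4" using min_ext[of r k "dl q0"] energy0_dl by simp
    then show "r = c" using h unfolding c_def by (simp add: field_simps)
  qed
  moreover have "1 / real k > 2 / (3 * real k)" using k by (simp add: field_simps)
  ultimately show ?thesis using cge by linarith
qed



end
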